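(* Let $X$ and $Y$ be self-dense (no isolated points), locally connected, compact metric spaces, let $f\colon X\to X$ be an inner-distal homeomorphism, and let $g\colon Y\to Y$ be a homeomorphism which is an extension of $f$ under an inner-light homomorphism $\pi\colon Y\to X$. Then $g$ is inner-distal.
   Context: For a homeomorphism $h\colon Z\to Z$ of a metric space $(Z,d)$, the proximal cell of $z\in Z$ is $\mathcal{P}(z)=\{w\in Z\colon \inf_{n\in\mathbb{Z}} d(h^n(z),h^n(w))=0\}$; $h$ is inner-distal if $\operatorname{Int}\mathcal{P}(z)=\emptyset$ for every $z\in Z$. A homomorphism from $g\colon Y\to Y$ to $f\colon X\to X$ is a continuous surjective map $\pi\colon Y\to X$ with $f\circ\pi=\pi\circ g$; then $g$ is called an extension of $f$ (under $\pi$). A subcontinuum of $Y$ is a non-empty compact connected subset. The map $\pi$ is inner-light if $\operatorname{Int} C=\emptyset$ for every subcontinuum $C\subseteq Y$ such that $\operatorname{Int}\pi(C)=\emptyset$. *)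

theory Defs
  imports "HOL-Analysis.Analysis"
begin

definition iter_int :: "('a \<Rightarrow> 'a) \<Rightarrow> ('a \<Rightarrow> 'a) \<Rightarrow> int \<Rightarrow> 'a \<Rightarrow> 'a" where
  "iter_int h h' n = (if 0 \<le> n then h ^^ nat n else h' ^^ nat (- n))"

definition self_homeo :: "'a::metric_space set \<Rightarrow> ('a \<Rightarrow> 'a) \<Rightarrow> bool" where
  "self_homeo Z h \<longleftrightarrow> (\<exists>h'. homeomorphism Z Z h h')"

definition homeo_inv :: "'a::metric_space set \<Rightarrow> ('a \<Rightarrow> 'a) \<Rightarrow> ('a \<Rightarrow> 'a)" where
  "homeo_inv Z h = (SOME h'. homeomorphism Z Z h h')"

definition proximal_cell :: "'a::metric_space set \<Rightarrow> ('a \<Rightarrow> 'a) \<Rightarrow> 'a \<Rightarrow> 'a set" where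
  "proximal_cell Z h z = {w \<in> Z. (INF n\<in>(UNIV::int set).
       dist (iter_int h (homeo_inv Z h) n z) (iter_int h (homeo_inv Z h) n w)) = 0}"

definition rel_interior_in :: "'a::metric_space set \<Rightarrow> 'a set \<Rightarrow> 'a set" where
  "rel_interior_in Z A = (top_of_set Z) interior_of A"

definition inner_distal :: "'a::metric_space set \<Rightarrow> ('a \<Rightarrow> 'a) \<Rightarrow> bool" where
  "inner_distal Z h \<longleftrightarrow> (\<forall>z\<in>Z. rel_interior_in Z (proximal_cell Z h z) = {})"

definition homomorphism_dyn ::
  "'b::metric_space set \<Rightarrow> ('b \<Rightarrow> 'b) \<Rightarrow> 'a::metric_space set \<Rightarrow> ('a \<Rightarrow> 'a) \<Rightarrow> ('b \<Rightarrow> 'a) \<Rightarrow> bool" where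
  "homomorphism_dyn Y g X f \<pi> \<longleftrightarrow> continuous_on Y \<pi> \<and> \<pi> ` Y = X \<and> (\<forall>y\<in>Y. f (\<pi> y) = \<pi> (g y))"

definition subcontinuum :: "'a::metric_space set \<Rightarrow> 'a set \<Rightarrow> bool" where
  "subcontinuum Y C \<longleftrightarrow> C \<noteq> {} \<and> C \<subseteq> Y \<and> compact C \<and> connected C"

definition inner_light ::
  "'b::metric_space set \<Rightarrow> 'a::metric_space set \<Rightarrow> ('b \<Rightarrow> 'a) \<Rightarrow> bool" where
  "inner_light Y X \<pi> \<longleftrightarrow> (\<forall>C. subcontinuum Y C \<and> rel_interior_in X (\<pi> ` C) = {}
        \<longrightarrow> rel_interior_in Y C = {})"

definition self_dense :: "'a::metric_space set \<Rightarrow> bool" where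
  "self_dense Z \<longleftrightarrow> (\<forall>z\<in>Z. z islimpt Z)"

end

theory Submission
  imports Defs
begin

lemma inf_zero_iff:
  fixes D :: "int \<Rightarrow> real"
  assumes "\<And>n. D n \<ge> 0"
  shows "(INF n\<in>(UNIV::int set). D n) = 0 \<longleftrightarrow> (\<forall>e>0. \<exists>n. D n < e)"
proof -
  have bdd: "bdd_below (D ` UNIV)" using assms by (metis bdd_belowI2)
  have ge: "(INF n\<in>(UNIV::int set). D n) \<ge> 0" using assms by (auto intro: cINF_greatest)
  show ?thesis
  proof
    assume "(INF n\<in>(UNIV::int set). D n) = 0"
    then show "\<forall>e>0. \<exists>n. D n < e" using cINF_less_iff[OF _ bdd] by auto
  next
    assume H: "\<forall>e>0. \<exists>n. D n < e"
    have "\<not> (INF n\<in>(UNIV::int set). D n) > 0"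
    proof
      assume p: "(INF n\<in>(UNIV::int set). D n) > 0"
      then obtain n where "D n < (INF n\<in>(UNIV::int set). D n)" using H by blast
      moreover have "(INF n\<in>(UNIV::int set). D n) \<le> D n" using bdd by (auto intro: cINF_lower)
      ultimately show False by simp
    qed
    then show "(INF n\<in>(UNIV::int set). D n) = 0" using ge by simp
  qed
qed

lemma iter_comm:
  assumes hg: "homeomorphism Y Y g gi" and hf: "homeomorphism X X f fi"
    and pY: "\<pi> ` Y = X" and comm: "\<forall>y\<in>Y. f (\<pi> y) = \<pi> (g y)"
    and y: "y \<in> Y"
  shows "iter_int g gi n y \<in> Y \<and> \<pi> (iter_int g gi n y) = iter_int f fi n (\<pi> y)"
proof -
  have gY: "\<And>y. y \<in> Y \<Longrightarrow> g y \<in> Y" and giY: "\<And>y. y \<in> Y \<Longrightarrow> gi y \<in> Y"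
    using hg unfolding homeomorphism_def by auto
  have ginv: "\<And>y. y \<in> Y \<Longrightarrow> g (gi y) = y" using hg unfolding homeomorphism_def by auto
  have finv: "\<And>x. x \<in> X \<Longrightarrow> fi (f x) = x" using hf unfolding homeomorphism_def by auto
  have pinv: "\<And>y. y \<in> Y \<Longrightarrow> \<pi> (gi y) = fi (\<pi> y)"
  proof -
    fix y assume "y \<in> Y"
    then have "\<pi> (gi y) \<in> X" using giY pY by auto
    then have "\<pi> (gi y) = fi (f (\<pi> (gi y)))" using finv by simp
    also have "\<dots> = fi (\<pi> y)" using comm giY ginv \<open>y \<in> Y\<close> by simp
    finally show "\<pi> (gi y) = fi (\<pi> y)" .
  qed
  have A: "\<And>k. (g ^^ k) y \<in> Y \<and> \<pi> ((g ^^ k) y) = (f ^^ k) (\<pi> y)"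
  proof -
    fix k show "(g ^^ k) y \<in> Y \<and> \<pi> ((g ^^ k) y) = (f ^^ k) (\<pi> y)"
      by (induction k) (use y gY comm in auto)
  qed
  have B: "\<And>k. (gi ^^ k) y \<in> Y \<and> \<pi> ((gi ^^ k) y) = (fi ^^ k) (\<pi> y)"
  proof -
    fix k show "(gi ^^ k) y \<in> Y \<and> \<pi> ((gi ^^ k) y) = (fi ^^ k) (\<pi> y)"
      by (induction k) (use y giY pinv in auto)
  qed
  show ?thesis unfolding iter_int_def using A B by auto
qed

theorem theorem2p11:
  fixes X :: "'a::metric_space set" and Y :: "'b::metric_space set"
    and f :: "'a \<Rightarrow> 'a" and g :: "'b \<Rightarrow> 'b" and \<pi> :: "'b \<Rightarrow> 'a"
  assumes "compact X" "compact Y"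
    and "self_dense X" "self_dense Y"
    and "locally connected X" "locally connected Y"
    and "self_homeo X f" "inner_distal X f"
    and "self_homeo Y g"
    and "homomorphism_dyn Y g X f \<pi>" "inner_light Y X \<pi>"
  shows "inner_distal Y g"
proof -
  define gi where "gi = homeo_inv Y g"
  define fi where "fi = homeo_inv X f"
  have hg: "homeomorphism Y Y g gi" using assms(9) unfolding gi_def homeo_inv_def self_homeo_def
    by (metis someI_ex)
  have hf: "homeomorphism X X f fi" using assms(7) unfolding fi_def homeo_inv_def self_homeo_def
    by (metis someI_ex)
  have pc: "continuous_on Y \<pi>" and pY: "\<pi> ` Y = X" and comm: "\<forall>y\<in>Y. f (\<pi> y) = \<pi> (g y)"
    using assms(10) unfolding homomorphism_dyn_def by auto
  have uc: "uniformly_continuous_on Y \<pi>" using compact_uniformly_continuous[OF pc assms(2)] .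
  have cellmap: "\<pi> w \<in> proximal_cell X f (\<pi> y)" if y: "y \<in> Y" and w: "w \<in> proximal_cell Y g y" for y w
  proof -
    have wY: "w \<in> Y" and wi: "(INF n\<in>(UNIV::int set). dist (iter_int g gi n y) (iter_int g gi n w)) = 0"
      using w unfolding proximal_cell_def gi_def by auto
    have sm: "\<forall>e>0. \<exists>n. dist (iter_int g gi n y) (iter_int g gi n w) < e"
      using inf_zero_iff[of "\<lambda>n. dist (iter_int g gi n y) (iter_int g gi n w)"] wi by simp
    have "\<forall>e>0. \<exists>n. dist (iter_int f fi n (\<pi> y)) (iter_int f fi n (\<pi> w)) < e"
    proof (intro allI impI)
      fix e :: real assume "e > 0"
      then obtain d where d: "d > 0" "\<And>a b. a \<in> Y \<Longrightarrow> b \<in> Y \<Longrightarrow> dist b a < d \<Longrightarrow> dist (\<pi> b) (\<pi> a) < e"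
        using uc unfolding uniformly_continuous_on_def by metis
      obtain n where n: "dist (iter_int g gi n y) (iter_int g gi n w) < d" using sm d(1) by blast
      have c1: "iter_int g gi n y \<in> Y \<and> \<pi> (iter_int g gi n y) = iter_int f fi n (\<pi> y)"
        using iter_comm[OF hg hf pY comm y] .
      have c2: "iter_int g gi n w \<in> Y \<and> \<pi> (iter_int g gi n w) = iter_int f fi n (\<pi> w)"
        using iter_comm[OF hg hf pY comm wY] .
      show "\<exists>n. dist (iter_int f fi n (\<pi> y)) (iter_int f fi n (\<pi> w)) < e"
        using d(2)[of "iter_int g gi n w" "iter_int g gi n y"] n c1 c2 by metis
    qed
    then have "(INF n\<in>(UNIV::int set). dist (iter_int f fi n (\<pi> y)) (iter_int f fi n (\<pi> w))) = 0"
      using inf_zero_iff[of "\<lambda>n. dist (iter_int f fi n (\<pi> y)) (iter_int f fi n (\<pi> w))"] by simp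
    then show ?thesis unfolding proximal_cell_def fi_def using wY pY by auto
  qed
  show ?thesis unfolding inner_distal_def
  proof (intro ballI)
    fix y assume y: "y \<in> Y"
    show "rel_interior_in Y (proximal_cell Y g y) = {}"
    proof (rule ccontr)
      assume "rel_interior_in Y (proximal_cell Y g y) \<noteq> {}"
      then obtain u T where T: "openin (top_of_set Y) T" "u \<in> T" "T \<subseteq> proximal_cell Y g y"
        unfolding rel_interior_in_def interior_of_def by auto
      then obtain e where e: "e > 0" "ball u e \<inter> Y \<subseteq> T"
        using openin_contains_ball by metis
      have uY: "u \<in> Y" using T openin_subset by fastforce
      have "openin (top_of_set Y) (ball u (e/2) \<inter> Y)" using openin_open_Int[of "ball u (e/2)" Y] by (simp add: Int_commute)
      then obtain W where W: "openin (top_of_set Y) W" "connected W" "u \<in> W" "W \<subseteq> ball u (e/2) \<inter> Y"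
        using assms(6) uY e(1) unfolding locally_connected by (metis centre_in_ball half_gt_zero IntI)
      define C where "C = closure W"
      have clY: "closed Y" using assms(2) compact_imp_closed by auto
      have "closure W \<subseteq> cball u (e/2) \<inter> Y"
        by (rule closure_minimal) (use W(4) clY ball_subset_cball in auto)
      also have "\<dots> \<subseteq> ball u e \<inter> Y" using e(1) by auto
      finally have CT: "C \<subseteq> proximal_cell Y g y" using e(2) T(3) C_def by auto
      have CY: "C \<subseteq> Y" using CT unfolding proximal_cell_def by auto
      have sc: "subcontinuum Y C" unfolding subcontinuum_def
      proof (intro conjI)
        show "C \<noteq> {}" using W(3) closure_subset C_def by auto
        show "C \<subseteq> Y" by (rule CY)
        show "compact C" using compact_Int_closed[OF assms(2), of C] CY C_def by (simp add: Int_absorb1)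
        show "connected C" using connected_imp_connected_closure W(2) C_def by auto
      qed
      have intC: "u \<in> rel_interior_in Y C" unfolding rel_interior_in_def
        using interior_of_maximal[of W C "top_of_set Y"] W closure_subset C_def by auto
      have "\<pi> ` C \<subseteq> proximal_cell X f (\<pi> y)" using cellmap y CT by auto
      then have "rel_interior_in X (\<pi> ` C) \<subseteq> rel_interior_in X (proximal_cell X f (\<pi> y))"
        unfolding rel_interior_in_def by (rule interior_of_mono)
      also have "\<dots> = {}" using assms(8) y pY unfolding inner_distal_def by auto
      finally have "rel_interior_in Y C = {}" using assms(11) sc unfolding inner_light_def by auto
      then show False using intC by auto
    qed
  qed
qed

end
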